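(* Let $x_1<x_2<\cdots<x_n$ be a partition of $[x_1,x_n]$, let $h_i=x_{i+1}-x_i$ for $i=1,\dots,n-1$, and $\hat h=\max_{1\le i\le n-1}h_i$. Let $f\in C^4([x_1,x_n])$ and let $L>0$ be such that $|f^{(4)}(x)|\le L$ for all $x\in[x_1,x_n]$. Write $f'_i=f'(x_i)$, $m_i=(f(x_{i+1})-f(x_i))/h_i$, $\lambda_i=\frac{h_{i+1}}{h_i+h_{i+1}}$ and $\mu_i=\frac{h_i}{h_i+h_{i+1}}$. Assume there exists $K>0$ such that $\hat h/h_j\le K$ for all $j=1,\dots,n-1$. For $2\le i\le n-1$ define $$R(i):=3\lambda_{i-1}m_{i-1}+3\mu_{i-1}m_i-\lambda_{i-1}f'_{i-1}-2f'_i-\mu_{i-1}f'_{i+1}.$$ Then for all $2\le i\le n-1$, $$|R(i)|\le\left(\frac{17K+K^2}{16}+1\right)L\,\hat h^3 .$$ *)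

theory Defs
  imports Complex_Main
begin

definition h :: "(nat \<Rightarrow> real) \<Rightarrow> nat \<Rightarrow> real" where
  "h x i = x (Suc i) - x i"

definition hmax :: "(nat \<Rightarrow> real) \<Rightarrow> nat \<Rightarrow> real" where
  "hmax x n = Max (h x ` {1..n-1})"

definition slope :: "(nat \<Rightarrow> real) \<Rightarrow> (real \<Rightarrow> real) \<Rightarrow> nat \<Rightarrow> real" where
  "slope x f i = (f (x (Suc i)) - f (x i)) / h x i"

definition lam :: "(nat \<Rightarrow> real) \<Rightarrow> nat \<Rightarrow> real" where
  "lam x i = h x (Suc i) / (h x i + h x (Suc i))"

definition mu :: "(nat \<Rightarrow> real) \<Rightarrow> nat \<Rightarrow> real" where
  "mu x i = h x i / (h x i + h x (Suc i))"

definition R :: "(nat \<Rightarrow> real) \<Rightarrow> (real \<Rightarrow> real) \<Rightarrow> (real \<Rightarrow> real) \<Rightarrow> nat \<Rightarrow> real" where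
  "R x f f1 i = 3 * lam x (i-1) * slope x f (i-1) + 3 * mu x (i-1) * slope x f i
     - lam x (i-1) * f1 (x (i-1)) - 2 * f1 (x i) - mu x (i-1) * f1 (x (Suc i))"

end

theory Submission
  imports Defs "HOL-Analysis.Analysis"
begin

lemma x_mono_aux:
  fixes x :: "nat \<Rightarrow> real"
  assumes incr: "\<And>i. 1 \<le> i \<Longrightarrow> i < n \<Longrightarrow> x i < x (Suc i)"
  shows "1 \<le> j \<Longrightarrow> j \<le> k \<Longrightarrow> k \<le> n \<Longrightarrow> x j \<le> x k"
proof (induction k)
  case 0 then show ?case by simp
next
  case (Suc k)
  show ?case
  proof (cases "j = Suc k")
    case True then show ?thesis by simp
  next
    case False
    then have "j \<le> k" using Suc by simp
    then have "x j \<le> x k" using Suc by simp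
    moreover have "x k < x (Suc k)" using incr[of k] Suc \<open>j \<le> k\<close> by simp
    ultimately show ?thesis by simp
  qed
qed

lemma alg:
  fixes a b F0 F1 F2 F3 E1 E2 E3 E4 :: real
  assumes "a > 0" "b > 0"
  shows "3 * (b / (a + b)) * ((F0 - (F0 - F1 * a + F2 * a^2/2 - F3 * a^3/6 + E2)) / a)
       + 3 * (a / (a + b)) * ((F0 + F1 * b + F2 * b^2/2 + F3 * b^3/6 + E1 - F0) / b)
       - (b / (a + b)) * (F1 - F2 * a + F3 * a^2/2 + E4) - 2 * F1
       - (a / (a + b)) * (F1 + F2 * b + F3 * b^2/2 + E3)
     = (3*a*a*E1 - 3*b*b*E2 - a*b*(b*E4 + a*E3)) / (a*b*(a+b))"
  using assms apply (simp add: divide_simps power2_eq_square power3_eq_cube)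
  apply (simp add: algebra_simps)
  done

theorem lemma2:
  fixes x :: "nat \<Rightarrow> real" and n :: nat
    and f f1 f2 f3 f4 :: "real \<Rightarrow> real" and L K :: real
  assumes incr: "\<And>i. 1 \<le> i \<Longrightarrow> i < n \<Longrightarrow> x i < x (Suc i)"
    and d1: "\<And>t. t \<in> {x 1..x n} \<Longrightarrow> (f has_real_derivative f1 t) (at t within {x 1..x n})"
    and d2: "\<And>t. t \<in> {x 1..x n} \<Longrightarrow> (f1 has_real_derivative f2 t) (at t within {x 1..x n})"
    and d3: "\<And>t. t \<in> {x 1..x n} \<Longrightarrow> (f2 has_real_derivative f3 t) (at t within {x 1..x n})"
    and d4: "\<And>t. t \<in> {x 1..x n} \<Longrightarrow> (f3 has_real_derivative f4 t) (at t within {x 1..x n})"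
    and c4: "continuous_on {x 1..x n} f4"
    and Lpos: "L > 0"
    and Lbound: "\<And>t. t \<in> {x 1..x n} \<Longrightarrow> \<bar>f4 t\<bar> \<le> L"
    and Kpos: "K > 0"
    and Kbound: "\<And>j. 1 \<le> j \<Longrightarrow> j \<le> n - 1 \<Longrightarrow> hmax x n / h x j \<le> K"
  shows "\<forall>i. 2 \<le> i \<and> i \<le> n - 1 \<longrightarrow>
           \<bar>R x f f1 i\<bar> \<le> ((17 * K + K^2) / 16 + 1) * L * hmax x n ^ 3"
proof (intro allI impI)
  fix i assume i: "2 \<le> i \<and> i \<le> n - 1"
  obtain j where j: "i = Suc j" "1 \<le> j" "Suc (Suc j) \<le> n"
  proof -
    have "i = Suc (i - 1)" "1 \<le> i - 1" "Suc (Suc (i - 1)) \<le> n" using i by arith+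
    then show ?thesis by (rule that)
  qed
  define S where "S = {x 1..x n}"
  have mono: "\<And>p q. 1 \<le> p \<Longrightarrow> p \<le> q \<Longrightarrow> q \<le> n \<Longrightarrow> x p \<le> x q"
    using x_mono_aux[of n x, OF incr] by blast
  have memS: "\<And>p. 1 \<le> p \<Longrightarrow> p \<le> n \<Longrightarrow> x p \<in> S"
    unfolding S_def using mono by auto
  have xa: "x j \<in> S" "x (Suc j) \<in> S" "x (Suc (Suc j)) \<in> S"
    using memS j by auto
  define a where "a = x (Suc j) - x j"
  define b where "b = x (Suc (Suc j)) - x (Suc j)"
  have apos: "a > 0" using incr[of j] j unfolding a_def by simp
  have bpos: "b > 0" using incr[of "Suc j"] j unfolding b_def by simp
  define F :: "nat \<Rightarrow> real \<Rightarrow> real" where "F = (\<lambda>k. [f,f1,f2,f3,f4] ! k)"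
  have F: "F 0 = f" "F 1 = f1" "F 2 = f2" "F 3 = f3" "F 4 = f4"
    unfolding F_def by (simp_all add: numeral_eq_Suc)
  have Fd: "\<And>k t. t \<in> S \<Longrightarrow> k \<le> 3 \<Longrightarrow> (F k has_real_derivative F (Suc k) t) (at t within S)"
  proof -
    fix k t assume t: "t \<in> S" and k: "k \<le> (3::nat)"
    then have "k = 0 \<or> k = 1 \<or> k = 2 \<or> k = 3" by auto
    then show "(F k has_real_derivative F (Suc k) t) (at t within S)"
      using d1 d2 d3 d4 t unfolding S_def F_def by (auto simp: numeral_eq_Suc)
  qed
  have Fd1: "\<And>k t. t \<in> S \<Longrightarrow> k \<le> 2 \<Longrightarrow> (F (Suc k) has_real_derivative F (Suc (Suc k)) t) (at t within S)"
    using Fd by simp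
  have cS: "convex S" unfolding S_def by simp
  have B: "\<And>t. t \<in> S \<Longrightarrow> norm (F (Suc 3) t) \<le> L"
    using Lbound unfolding S_def F_def by (simp add: numeral_eq_Suc)
  have B1: "\<And>t. t \<in> S \<Longrightarrow> norm ((\<lambda>k. F (Suc k)) (Suc 2) t) \<le> L"
    using Lbound unfolding S_def F_def by (simp add: numeral_eq_Suc)
  have T: "norm (F 0 z - (\<Sum>k\<le>3. F k w * (z-w)^k / fact k)) \<le> L * norm (z-w)^Suc 3 / fact 3"
    if "w \<in> S" "z \<in> S" for w z
    by (rule field_Taylor[of S 3 F L w z]) (use cS Fd B that in auto)
  have T1: "norm (F (Suc 0) z - (\<Sum>k\<le>2. F (Suc k) w * (z-w)^k / fact k)) \<le> L * norm (z-w)^Suc 2 / fact 2"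
    if "w \<in> S" "z \<in> S" for w z
    by (rule field_Taylor[of S 2 "\<lambda>k. F (Suc k)" L w z]) (use cS Fd1 B1 that in auto)
  define y where "y = x (Suc j)"
  have xa': "y \<in> S" "y + b \<in> S" "y - a \<in> S"
    using xa unfolding y_def a_def b_def by simp_all
  have FS: "F (Suc 0) = f1" "F (Suc (Suc 0)) = f2" "F (Suc (Suc (Suc 0))) = f3"
    using F by (simp_all add: numeral_eq_Suc)
  have ab: "\<bar>a\<bar> = a" "\<bar>b\<bar> = b" using apos bpos by simp_all
  have e1: "\<bar>f (y + b) - (f y + f1 y * b + f2 y * b^2/2 + f3 y * b^3/6)\<bar> \<le> L * b^4/6"
    using T[OF xa'(1) xa'(2)]
    by (simp add: F FS ab eval_nat_numeral atMost_Suc fact_numeral algebra_simps)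
  have e2: "\<bar>f (y - a) - (f y - f1 y * a + f2 y * a^2/2 - f3 y * a^3/6)\<bar> \<le> L * a^4/6"
    using T[OF xa'(1) xa'(3)]
    by (simp add: F FS ab eval_nat_numeral atMost_Suc fact_numeral algebra_simps)
  have e3: "\<bar>f1 (y + b) - (f1 y + f2 y * b + f3 y * b^2/2)\<bar> \<le> L * b^3/2"
    using T1[OF xa'(1) xa'(2)]
    by (simp add: F FS ab eval_nat_numeral atMost_Suc fact_numeral algebra_simps)
  have e4: "\<bar>f1 (y - a) - (f1 y - f2 y * a + f3 y * a^2/2)\<bar> \<le> L * a^3/2"
    using T1[OF xa'(1) xa'(3)]
    by (simp add: F FS ab eval_nat_numeral atMost_Suc fact_numeral algebra_simps)
  define E1 where "E1 = f (y + b) - (f y + f1 y * b + f2 y * b^2/2 + f3 y * b^3/6)"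
  define E2 where "E2 = f (y - a) - (f y - f1 y * a + f2 y * a^2/2 - f3 y * a^3/6)"
  define E3 where "E3 = f1 (y + b) - (f1 y + f2 y * b + f3 y * b^2/2)"
  define E4 where "E4 = f1 (y - a) - (f1 y - f2 y * a + f3 y * a^2/2)"
  have xs: "x j = y - a" "x (Suc (Suc j)) = y + b" "x (Suc j) = y"
    unfolding y_def a_def b_def by simp_all
  have hs: "h x j = a" "h x (Suc j) = b" unfolding h_def a_def b_def by simp_all
  have fs: "f (y + b) = f y + f1 y * b + f2 y * b^2/2 + f3 y * b^3/6 + E1"
    "f (y - a) = f y - f1 y * a + f2 y * a^2/2 - f3 y * a^3/6 + E2"
    "f1 (y + b) = f1 y + f2 y * b + f3 y * b^2/2 + E3"
    "f1 (y - a) = f1 y - f2 y * a + f3 y * a^2/2 + E4"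
    unfolding E1_def E2_def E3_def E4_def by simp_all
  have Req: "R x f f1 i = (3*a*a*E1 - 3*b*b*E2 - a*b*(b*E4 + a*E3)) / (a*b*(a+b))"
    unfolding R_def slope_def lam_def mu_def j(1)
    apply (simp only: diff_Suc_1 xs hs fs)
    apply (rule alg[OF apos bpos])
    done
  have Ebd: "\<bar>E1\<bar> \<le> L * b^4/6" "\<bar>E2\<bar> \<le> L * a^4/6" "\<bar>E3\<bar> \<le> L * b^3/2" "\<bar>E4\<bar> \<le> L * a^3/2"
    using e1 e2 e3 e4 unfolding E1_def E2_def E3_def E4_def by simp_all
  define H where "H = hmax x n"
  have aH: "a \<le> H" "b \<le> H"
    unfolding H_def hmax_def hs[symmetric] using j by (auto intro!: Max_ge)
  have u1: "\<bar>3*a*a*E1\<bar> \<le> 3*a*a*(L * b^4/6)"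
    using apos bpos Ebd(1) by (simp add: abs_mult mult_left_mono)
  have u2: "\<bar>3*b*b*E2\<bar> \<le> 3*b*b*(L * a^4/6)"
    using apos bpos Ebd(2) by (simp add: abs_mult mult_left_mono)
  have u3: "\<bar>a*b*b*E4\<bar> \<le> a*b*b*(L * a^3/2)"
    using apos bpos Ebd(4) by (simp add: abs_mult mult_left_mono)
  have u4: "\<bar>a*b*a*E3\<bar> \<le> a*b*a*(L * b^3/2)"
    using apos bpos Ebd(3) by (simp add: abs_mult mult_left_mono)
  have Neq: "3*a*a*E1 - 3*b*b*E2 - a*b*(b*E4 + a*E3) = 3*a*a*E1 - 3*b*b*E2 - a*b*b*E4 - a*b*a*E3"
    by (simp add: algebra_simps)
  have sumeq: "3*a*a*(L * b^4/6) + 3*b*b*(L * a^4/6) + a*b*b*(L * a^3/2) + a*b*a*(L * b^3/2)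
      = L * (a*a*b*b*(a*a+b*b))"
    by (simp add: power2_eq_square power3_eq_cube eval_nat_numeral algebra_simps)
  have num: "\<bar>3*a*a*E1 - 3*b*b*E2 - a*b*(b*E4 + a*E3)\<bar> \<le> L * (a*a*b*b*(a*a+b*b))"
    unfolding Neq sumeq[symmetric] using u1 u2 u3 u4 unfolding abs_le_iff by linarith
  have "\<bar>R x f f1 i\<bar> \<le> L * (a*a*b*b*(a*a+b*b)) / (a*b*(a+b))"
  proof -
    have D: "a*b*(a+b) > 0" using apos bpos by simp
    have "\<bar>R x f f1 i\<bar> = \<bar>3*a*a*E1 - 3*b*b*E2 - a*b*(b*E4 + a*E3)\<bar> / (a*b*(a+b))"
      unfolding Req abs_divide using D by simp
    also have "\<dots> \<le> L * (a*a*b*b*(a*a+b*b)) / (a*b*(a+b))"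
      by (rule divide_right_mono[OF num]) (use D in simp)
    finally show ?thesis .
  qed
  also have "\<dots> = L * (a*b*(a*a+b*b)) / (a+b)"
    using apos bpos by (simp add: divide_simps)
  also have "\<dots> \<le> L * H^3"
  proof -
    have m1: "a*b \<le> H*H" using aH apos bpos by (intro mult_mono) auto
    have m2: "a*a+b*b \<le> H*(a+b)" using aH apos bpos
      by (simp add: distrib_left add_mono mult_right_mono)
    have "a*b*(a*a+b*b) \<le> H*H*(H*(a+b))"
      by (rule mult_mono[OF m1 m2]) (use apos bpos aH in auto)
    then have "L*(a*b*(a*a+b*b)) \<le> L*(H*H*(H*(a+b)))" using Lpos
      by (intro mult_left_mono) auto
    also have "H*H*(H*(a+b)) = H^3*(a+b)" by (simp add: power3_eq_cube)
    finally have "L*(a*b*(a*a+b*b)) \<le> L*(H^3*(a+b))" .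
    then show ?thesis using apos bpos by (simp add: divide_le_eq algebra_simps)
  qed
  also have "\<dots> \<le> ((17 * K + K^2) / 16 + 1) * L * H ^ 3"
  proof -
    have H0: "H \<ge> 0" using aH apos by simp
    have "1 \<le> (17 * K + K^2) / 16 + 1" using Kpos by simp
    then show ?thesis using H0 Lpos
      by (metis mult_right_mono mult.commute mult_1 mult_nonneg_nonneg less_le zero_le_power mult.assoc)
  qed
  finally show "\<bar>R x f f1 i\<bar> \<le> ((17 * K + K^2) / 16 + 1) * L * hmax x n ^ 3"
    unfolding H_def .
qed

end
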